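(* Let $A=(\Sigma,q,N,\delta)$ be a simple LQCA with $|N|=r\ge2$. Then the columns $U_A(\cdot,c)$, $c\in\mathcal C_A$, are pairwise orthogonal (i.e. $\langle U_A(\cdot,c),U_A(\cdot,c')\rangle=0$ for all $c\neq c'$) if and only if $p_1=p_2$ for every $q$-cycle $p$ of the graph $H_A$.
   Context: A linear quantum cellular automaton (LQCA) is a tuple $A=(\Sigma,q,N,\delta)$ where $\Sigma$ is a finite nonempty set of states, $N=(a_1,\dots,a_r)$ is a strictly increasing sequence of integers, $\delta:\Sigma^r\to\mathbb C^\Sigma$ satisfies $\|\delta(w)\|>0$ for all $w$, and $q\in\Sigma$ satisfies $[\delta(q,\dots,q)](x)=1$ if $x=q$ and $0$ otherwise. It is simple if $a_r-a_1=r-1$. On $\mathbb C^\Sigma$, $\langle u,v\rangle=\sum_x u(x)\overline{v(x)}$, and $u\perp v$ means $\langle u,v\rangle=0$. A configuration is a map $c:\mathbb Z\to\Sigma$ with $c_i\ne q$ for only finitely many $i$; $\mathcal C_A$ is the set of configurations. With $c_{i+N}=(c_{i+a_1},\dots,c_{i+a_r})$, $U_A(d,c)=\prod_{i\in\mathbb Z}[\delta(c_{i+N})](d_i)$; $U_A(\cdot,c)$ is the column $d\mapsto U_A(d,c)$ in $\ell_2(\mathcal C_A)$ with inner product $\langle u,v\rangle=\sum_d u(d)\overline{v(d)}$. The directed graph $H_A=(V,E)$ has $V=\Sigma^{r-1}\times\Sigma^{r-1}$ and $E=\{((x_1z_1,x_2z_2),(z_1y_1,z_2y_2)):x_1,x_2,y_1,y_2\in\Sigma,\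 z_1,z_2\in\Sigma^{r-2},\ \delta(x_1z_1y_1)\not\perp\delta(x_2z_2y_2)\}$. A path $p=((u_0,v_0),\dots,(u_k,v_k))$ in $H_A$ is a cycle if $k>0$ and $(u_0,v_0)=(u_k,v_k)$, and a $q$-cycle if moreover $(u_0,v_0)=(q^{r-1},q^{r-1})$; $p_1=(u_0,\dots,u_k)$ and $p_2=(v_0,\dots,v_k)$. *)

theory Defs
  imports "HOL-Analysis.Analysis" "HOL-Library.Groups_Big_Fun"
begin

definition vinner :: "('s::finite \<Rightarrow> complex) \<Rightarrow> ('s \<Rightarrow> complex) \<Rightarrow> complex" where
  "vinner u v = (\<Sum>x\<in>UNIV. u x * cnj (v x))"

definition vnorm :: "('s::finite \<Rightarrow> complex) \<Rightarrow> real" where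
  "vnorm u = sqrt (\<Sum>x\<in>UNIV. (cmod (u x))\<^sup>2)"

definition is_lqca :: "'s::finite \<Rightarrow> int list \<Rightarrow> ('s list \<Rightarrow> 's \<Rightarrow> complex) \<Rightarrow> bool" where
  "is_lqca q N \<delta> \<longleftrightarrow>
     N \<noteq> [] \<and> sorted_wrt (<) N \<and>
     (\<forall>w. length w = length N \<longrightarrow> vnorm (\<delta> w) > 0) \<and>
     (\<forall>x. \<delta> (replicate (length N) q) x = (if x = q then 1 else 0))"

definition simple_nbhd :: "int list \<Rightarrow> bool" where
  "simple_nbhd N \<longleftrightarrow> last N - hd N = int (length N) - 1"

definition configs :: "'s \<Rightarrow> (int \<Rightarrow> 's) set" where
  "configs q = {c. finite {i. c i \<noteq> q}}"

definition nbhd :: "(int \<Rightarrow> 's) \<Rightarrow> int list \<Rightarrow> int \<Rightarrow> 's list" where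
  "nbhd c N i = map (\<lambda>a. c (i + a)) N"

text \<open>U_A(d,c) = prod over i in Z of delta(c_{i+N})(d_i); for configurations only
  finitely many factors differ from 1, so this is the product over those (Prod_any).\<close>
definition U :: "int list \<Rightarrow> ('s list \<Rightarrow> 's \<Rightarrow> complex) \<Rightarrow> (int \<Rightarrow> 's) \<Rightarrow> (int \<Rightarrow> 's) \<Rightarrow> complex" where
  "U N \<delta> d c = Prod_any (\<lambda>i. \<delta> (nbhd c N i) (d i))"

definition col_inner :: "'s \<Rightarrow> int list \<Rightarrow> ('s list \<Rightarrow> 's \<Rightarrow> complex) \<Rightarrow> (int \<Rightarrow> 's) \<Rightarrow> (int \<Rightarrow> 's) \<Rightarrow> complex" where
  "col_inner q N \<delta> c c' = infsum (\<lambda>d. U N \<delta> d c * cnj (U N \<delta> d c')) (configs q)"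

definition H_edge :: "int list \<Rightarrow> ('s::finite list \<Rightarrow> 's \<Rightarrow> complex) \<Rightarrow> ('s list \<times> 's list) \<Rightarrow> ('s list \<times> 's list) \<Rightarrow> bool" where
  "H_edge N \<delta> u v \<longleftrightarrow>
     (\<exists>x1 x2 y1 y2 z1 z2. length z1 = length N - 2 \<and> length z2 = length N - 2 \<and>
        u = (x1 # z1, x2 # z2) \<and> v = (z1 @ [y1], z2 @ [y2]) \<and>
        vinner (\<delta> (x1 # z1 @ [y1])) (\<delta> (x2 # z2 @ [y2])) \<noteq> 0)"

definition H_path :: "int list \<Rightarrow> ('s::finite list \<Rightarrow> 's \<Rightarrow> complex) \<Rightarrow> ('s list \<times> 's list) list \<Rightarrow> bool" where
  "H_path N \<delta> p \<longleftrightarrow> p \<noteq> [] \<and>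
     (\<forall>i. i + 1 < length p \<longrightarrow> H_edge N \<delta> (p ! i) (p ! (i + 1)))"

definition q_cycle :: "'s::finite \<Rightarrow> int list \<Rightarrow> ('s list \<Rightarrow> 's \<Rightarrow> complex) \<Rightarrow> ('s list \<times> 's list) list \<Rightarrow> bool" where
  "q_cycle q N \<delta> p \<longleftrightarrow> H_path N \<delta> p \<and> length p \<ge> 2 \<and>
     hd p = (replicate (length N - 1) q, replicate (length N - 1) q) \<and> last p = hd p"

end

theory Submission
  imports Defs
begin


lemma Prod_any_cfg:
  fixes f :: "int \<Rightarrow> 's::finite \<Rightarrow> complex"
  assumes I: "finite I" and fI: "\<And>i x. i \<notin> I \<Longrightarrow> f i x = (if x = q then 1 else 0)"
    and d: "d \<in> configs q"
  shows "Prod_any (\<lambda>i. f i (d i)) = (if \<forall>i. i \<notin> I \<longrightarrow> d i = q then (\<Prod>i\<in>I. f i (d i)) else 0)"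
proof -
  let ?T = "I \<union> {i. d i \<noteq> q}"
  have fT: "finite ?T" using I d by (simp add: configs_def)
  have sub: "{i. f i (d i) \<noteq> 1} \<subseteq> ?T" using fI by auto
  have e: "Prod_any (\<lambda>i. f i (d i)) = (\<Prod>i\<in>?T. f i (d i))"
    by (rule Prod_any.expand_superset[OF fT sub])
  show ?thesis
  proof (cases "\<forall>i. i \<notin> I \<longrightarrow> d i = q")
    case True
    then have "?T = I" by auto
    then show ?thesis using e True by simp
  next
    case False
    then obtain i where i: "i \<notin> I" "d i \<noteq> q" by auto
    then have "f i (d i) = 0" using fI by simp
    moreover have "i \<in> ?T" using i by simp
    ultimately have "(\<Prod>i\<in>?T. f i (d i)) = 0" using fT by (meson prod_zero_iff)
    then show ?thesis using e False by auto
  qed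
qed

lemma col_sum_prod:
  fixes f g :: "int \<Rightarrow> 's::finite \<Rightarrow> complex"
  assumes I: "finite I"
    and fI: "\<And>i x. i \<notin> I \<Longrightarrow> f i x = (if x = q then 1 else 0)"
    and gI: "\<And>i x. i \<notin> I \<Longrightarrow> g i x = (if x = q then 1 else 0)"
  shows "infsum (\<lambda>d. Prod_any (\<lambda>i. f i (d i)) * cnj (Prod_any (\<lambda>i. g i (d i)))) (configs q)
       = (\<Prod>i\<in>I. vinner (f i) (g i))"
proof -
  define D where "D = {d. \<forall>i. i \<notin> I \<longrightarrow> d i = (q::'s)}"
  define h where "h = (\<lambda>(e::int \<Rightarrow> 's) i. if i \<in> I then e i else q)"
  have Deq: "D = h ` PiE I (\<lambda>_. UNIV)"
  proof
    show "D \<subseteq> h ` PiE I (\<lambda>_. UNIV)"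
    proof
      fix d assume "d \<in> D"
      then have "d = h (restrict d I)" unfolding D_def h_def by auto
      then show "d \<in> h ` PiE I (\<lambda>_. UNIV)" by auto
    qed
  qed (auto simp: D_def h_def)
  have inj: "inj_on h (PiE I (\<lambda>_. UNIV))"
  proof
    fix x y assume x: "x \<in> PiE I (\<lambda>_. UNIV)" and y: "y \<in> PiE I (\<lambda>_. UNIV)" and "h x = h y"
    then have "\<forall>i\<in>I. x i = y i" unfolding h_def by (metis)
    then show "x = y" using x y by (metis PiE_ext)
  qed
  have fD: "finite D" using Deq I by (simp add: finite_PiE)
  have Dc: "D \<subseteq> configs q"
  proof
    fix d assume "d \<in> D"
    then have "{i. d i \<noteq> q} \<subseteq> I" by (auto simp: D_def)
    then show "d \<in> configs q" using I by (auto simp: configs_def intro: finite_subset)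
  qed
  let ?F = "\<lambda>d. Prod_any (\<lambda>i. f i (d i)) * cnj (Prod_any (\<lambda>i. g i (d i)))"
  let ?G = "\<lambda>d. \<Prod>i\<in>I. f i (d i) * cnj (g i (d i))"
  have "infsum ?F (configs q) = infsum ?G D"
  proof (rule infsum_cong_neutral)
    fix d assume "d \<in> configs q - D"
    then show "?F d = 0" using Prod_any_cfg[where I=I and f=f and q=q and d=d, OF I fI] by (auto simp: D_def)
  next
    fix d assume "d \<in> D - configs q" then show "?G d = 0" using Dc by auto
  next
    fix d assume d: "d \<in> configs q \<inter> D"
    then show "?F d = ?G d" using Prod_any_cfg[where I=I and f=f and q=q and d=d, OF I fI] Prod_any_cfg[where I=I and f=g and q=q and d=d, OF I gI]
      by (auto simp: D_def prod.distrib)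
  qed
  also have "\<dots> = sum ?G D" using fD by simp
  also have "\<dots> = sum (?G \<circ> h) (PiE I (\<lambda>_. UNIV))" unfolding Deq by (rule sum.reindex[OF inj])
  also have "\<dots> = (\<Sum>e\<in>PiE I (\<lambda>_. UNIV). \<Prod>i\<in>I. f i (e i) * cnj (g i (e i)))"
    by (intro sum.cong refl prod.cong) (auto simp: h_def)
  also have "\<dots> = (\<Prod>i\<in>I. \<Sum>y\<in>UNIV. f i y * cnj (g i y))"
    by (rule prod_sum_PiE[symmetric]) (use I in auto)
  finally show ?thesis by (simp add: vinner_def)
qed



definition win :: "(int \<Rightarrow> 's) \<Rightarrow> int \<Rightarrow> nat \<Rightarrow> 's list" where
  "win c j n = map (\<lambda>k. c (j + int k)) [0..<n]"

lemma win_length[simp]: "length (win c j n) = n" by (simp add: win_def)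
lemma win_nth[simp]: "m < n \<Longrightarrow> win c j n ! m = c (j + int m)" by (simp add: win_def)

lemma win_Suc_Cons: "win c j (Suc m) = c j # win c (j+1) m"
  by (rule nth_equalityI) (auto simp: nth_Cons' algebra_simps)

lemma win_Suc_snoc: "win c j (Suc m) = win c j m @ [c (j + int m)]"
  by (simp add: win_def)

lemma simple_N:
  assumes "sorted_wrt (<) N" "simple_nbhd N" "N \<noteq> []"
  shows "N = map (\<lambda>k. hd N + int k) [0..<length N]"
proof -
  let ?r = "length N"
  have lt: "\<And>i j. i < j \<Longrightarrow> j < ?r \<Longrightarrow> N ! i < N ! j"
    using assms(1) by (simp add: sorted_wrt_iff_nth_less)
  have ge: "N ! j - N ! i \<ge> int j - int i" if "i \<le> j" "j < ?r" for i j
    using that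
  proof (induction j)
    case 0 then show ?case by simp
  next
    case (Suc j)
    show ?case
    proof (cases "i = Suc j")
      case True then show ?thesis by simp
    next
      case False
      then have "i \<le> j" using Suc by simp
      then have "N ! j - N ! i \<ge> int j - int i" using Suc by simp
      moreover have "N ! j < N ! Suc j" using lt Suc by simp
      ultimately show ?thesis by simp
    qed
  qed
  have hd: "hd N = N ! 0" using assms(3) by (simp add: hd_conv_nth)
  have la: "last N = N ! (?r - 1)" using assms(3) by (simp add: last_conv_nth)
  have tot: "N ! (?r - 1) - N ! 0 = int ?r - 1" using assms(2) hd la by (simp add: simple_nbhd_def)
  show ?thesis
  proof (rule nth_equalityI)
    fix k assume k: "k < length N"
    have "N ! k - N ! 0 \<ge> int k" using ge[of 0 k] k by simp
    moreover have "N ! (?r - 1) - N ! k \<ge> int (?r - 1) - int k" using ge[of k "?r - 1"] k by simp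
    ultimately show "N ! k = map (\<lambda>k. hd N + int k) [0..<length N] ! k"
      using k tot hd by simp
  qed simp
qed

lemma nbhd_win:
  assumes "N = map (\<lambda>k. a + int k) [0..<r]"
  shows "nbhd c N i = win c (i + a) r"
  using assms by (simp add: nbhd_def win_def algebra_simps)

definition V :: "(int \<Rightarrow> 's) \<Rightarrow> (int \<Rightarrow> 's) \<Rightarrow> nat \<Rightarrow> int \<Rightarrow> 's list \<times> 's list" where
  "V c c' n j = (win c j n, win c' j n)"

lemma edge_V:
  fixes \<delta> :: "'s::finite list \<Rightarrow> 's \<Rightarrow> complex"
  assumes "length N = Suc (Suc m)"
  shows "H_edge N \<delta> (V c c' (Suc m) j) (V c c' (Suc m) (j+1)) \<longleftrightarrow>
         vinner (\<delta> (win c j (Suc (Suc m)))) (\<delta> (win c' j (Suc (Suc m)))) \<noteq> 0"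
proof -
  have w: "win c j (Suc (Suc m)) = c j # win c (j+1) m @ [c (j + 1 + int m)]" for c
    by (simp only: win_Suc_Cons[of c j] win_Suc_snoc[of c "j+1" m] append_Cons)
  have w1: "win c j (Suc m) = c j # win c (j+1) m" for c by (simp add: win_Suc_Cons)
  have w2: "win c (j+1) (Suc m) = win c (j+1) m @ [c (j + 1 + int m)]" for c
    by (rule win_Suc_snoc)
  show ?thesis
    unfolding H_edge_def V_def assms w w1 w2 by auto
qed

lemma win_from_shift:
  fixes L :: "int \<Rightarrow> 's list"
  assumes len: "\<And>j. length (L j) = n"
    and sh: "\<And>j m. Suc m < n \<Longrightarrow> L (j+1) ! m = L j ! Suc m"
  shows "win (\<lambda>t. L t ! 0) j n = L j"
proof -
  have key: "m < n \<Longrightarrow> L (j + int m) ! 0 = L j ! m" for m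
  proof (induction m arbitrary: j)
    case 0 then show ?case by simp
  next
    case (Suc m)
    have "L (j + int (Suc m)) ! 0 = L ((j+1) + int m) ! 0" by (simp add: algebra_simps)
    also have "\<dots> = L (j+1) ! m" using Suc by simp
    also have "\<dots> = L j ! Suc m" using sh Suc by simp
    finally show ?case .
  qed
  show ?thesis by (rule nth_equalityI) (auto simp: len key)
qed

lemma H_edge_shape:
  assumes "H_edge N \<delta> u v" "length N \<ge> 2"
  shows "length (fst u) = length N - 1" "length (snd u) = length N - 1"
    "length (fst v) = length N - 1" "length (snd v) = length N - 1"
    "\<And>m. Suc m < length N - 1 \<Longrightarrow> fst v ! m = fst u ! Suc m"
    "\<And>m. Suc m < length N - 1 \<Longrightarrow> snd v ! m = snd u ! Suc m"
  using assms by (auto simp: H_edge_def nth_append)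



lemma vinner_delta_q: "vinner (\<lambda>x::'s::finite. if x = q then 1 else 0) (\<lambda>x. if x = q then 1 else 0) = 1"
  unfolding vinner_def by (simp add: if_distrib cong: if_cong)

lemma col_inner_zero_iff:
  fixes q :: "'s::finite" and \<delta> :: "'s list \<Rightarrow> 's \<Rightarrow> complex"
  assumes L: "is_lqca q N \<delta>" and c: "c \<in> configs q" and c': "c' \<in> configs q"
  shows "col_inner q N \<delta> c c' = 0 \<longleftrightarrow> (\<exists>i. vinner (\<delta> (nbhd c N i)) (\<delta> (nbhd c' N i)) = 0)"
proof -
  define S where "S = {t. c t \<noteq> q} \<union> {t. c' t \<noteq> q}"
  define I where "I = (\<Union>a\<in>set N. (\<lambda>t. t - a) ` S)"
  have fS: "finite S" using c c' by (simp add: S_def configs_def)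
  have fI: "finite I" using fS by (simp add: I_def)
  have rep: "nbhd e N i = replicate (length N) q" if "i \<notin> I" "e = c \<or> e = c'" for i e
  proof -
    have "\<forall>a\<in>set N. e (i + a) = q"
    proof
      fix a assume a: "a \<in> set N"
      show "e (i + a) = q"
      proof (rule ccontr)
        assume "e (i + a) \<noteq> q"
        then have "i + a \<in> S" using that(2) by (auto simp: S_def)
        then have "i \<in> I" using a unfolding I_def by force
        then show False using that(1) by simp
      qed
    qed
    then have "nbhd e N i = map (\<lambda>_. q) N" unfolding nbhd_def by simp
    then show ?thesis by (simp add: map_replicate_const)
  qed
  have dq: "\<delta> (replicate (length N) q) x = (if x = q then 1 else 0)" for x
    using L by (simp add: is_lqca_def)
  have dq': "\<delta> (replicate (length N) q) = (\<lambda>x. if x = q then 1 else 0)"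
    using dq by (rule ext)
  have "col_inner q N \<delta> c c' = (\<Prod>i\<in>I. vinner (\<delta> (nbhd c N i)) (\<delta> (nbhd c' N i)))"
    unfolding col_inner_def U_def
    by (rule col_sum_prod[where f = "\<lambda>i. \<delta> (nbhd c N i)" and g = "\<lambda>i. \<delta> (nbhd c' N i)", OF fI])
       (simp_all add: rep dq)
  also have "\<dots> = 0 \<longleftrightarrow> (\<exists>i\<in>I. vinner (\<delta> (nbhd c N i)) (\<delta> (nbhd c' N i)) = 0)"
    using fI by simp
  also have "\<dots> \<longleftrightarrow> (\<exists>i. vinner (\<delta> (nbhd c N i)) (\<delta> (nbhd c' N i)) = 0)"
  proof
    assume "\<exists>i. vinner (\<delta> (nbhd c N i)) (\<delta> (nbhd c' N i)) = 0"
    then obtain i where i: "vinner (\<delta> (nbhd c N i)) (\<delta> (nbhd c' N i)) = 0" by blast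
    have "i \<in> I"
    proof (rule ccontr)
      assume "i \<notin> I"
      then have "vinner (\<delta> (nbhd c N i)) (\<delta> (nbhd c' N i)) = 1"
        using rep[of i c] rep[of i c'] dq' vinner_delta_q[of q] by simp
      then show False using i by simp
    qed
    then show "\<exists>i\<in>I. vinner (\<delta> (nbhd c N i)) (\<delta> (nbhd c' N i)) = 0" using i by blast
  qed blast
  finally show ?thesis .
qed



lemma win_const: "win (\<lambda>_. q) j n = replicate n q"
  by (simp add: win_def map_replicate_const)

theorem lemma5:
  fixes q :: "'s::finite" and N :: "int list" and \<delta> :: "'s list \<Rightarrow> 's \<Rightarrow> complex"
  assumes "is_lqca q N \<delta>" and "simple_nbhd N" and "length N \<ge> 2"
  shows "(\<forall>c\<in>configs q. \<forall>c'\<in>configs q. c \<noteq> c' \<longrightarrow> col_inner q N \<delta> c c' = 0)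
     \<longleftrightarrow> (\<forall>p. q_cycle q N \<delta> p \<longrightarrow> map fst p = map snd p)"
proof -
  note L = assms(1)
  obtain m where r: "length N = Suc (Suc m)" using assms(3)
    by (metis add_2_eq_Suc le_Suc_ex)
  define n where "n = Suc m"
  have n1: "length N - 1 = n" using r n_def by simp
  define a where "a = hd N"
  have Neq: "N = map (\<lambda>k. a + int k) [0..<length N]"
    unfolding a_def by (rule simple_N) (use L assms(2) in \<open>auto simp: is_lqca_def\<close>)
  have nb: "nbhd c N i = win c (i + a) (Suc n)" for c i
    using nbhd_win[OF Neq] r n_def by simp
  have edge: "H_edge N \<delta> (V c c' n j) (V c c' n (j+1)) \<longleftrightarrow>
      vinner (\<delta> (win c j (Suc n))) (\<delta> (win c' j (Suc n))) \<noteq> 0" for c c' j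
    using edge_V[OF r] n_def by simp
  have allnz: "col_inner q N \<delta> c c' \<noteq> 0 \<longleftrightarrow> (\<forall>j. H_edge N \<delta> (V c c' n j) (V c c' n (j+1)))"
    if "c \<in> configs q" "c' \<in> configs q" for c c'
  proof -
    have "col_inner q N \<delta> c c' \<noteq> 0 \<longleftrightarrow> (\<forall>i. vinner (\<delta> (win c (i + a) (Suc n))) (\<delta> (win c' (i + a) (Suc n))) \<noteq> 0)"
      using col_inner_zero_iff[OF L that] by (simp add: nb)
    also have "\<dots> \<longleftrightarrow> (\<forall>j. vinner (\<delta> (win c j (Suc n))) (\<delta> (win c' j (Suc n))) \<noteq> 0)"
    proof
      assume H: "\<forall>i. vinner (\<delta> (win c (i + a) (Suc n))) (\<delta> (win c' (i + a) (Suc n))) \<noteq> 0"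
      show "\<forall>j. vinner (\<delta> (win c j (Suc n))) (\<delta> (win c' j (Suc n))) \<noteq> 0"
      proof
        fix j show "vinner (\<delta> (win c j (Suc n))) (\<delta> (win c' j (Suc n))) \<noteq> 0"
          using H[rule_format, of "j - a"] by simp
      qed
    qed simp
    finally show ?thesis by (simp add: edge)
  qed
  define qn where "qn = replicate n q"
  have dq: "\<delta> (replicate (length N) q) = (\<lambda>x. if x = q then 1 else 0)"
    using L by (auto simp: is_lqca_def)
  have qqedge: "H_edge N \<delta> (qn, qn) (qn, qn)"
  proof -
    have "V (\<lambda>_. q) (\<lambda>_. q) n j = (qn, qn)" for j by (simp add: V_def win_const qn_def)
    moreover have "vinner (\<delta> (win (\<lambda>_. q) 0 (Suc n))) (\<delta> (win (\<lambda>_. q) 0 (Suc n))) \<noteq> 0"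
      using dq r n_def vinner_delta_q[of q] by (simp add: win_const)
    ultimately show ?thesis using edge[of "\<lambda>_. q" "\<lambda>_. q" 0] by simp
  qed
  show ?thesis
  proof
    assume LHS: "\<forall>c\<in>configs q. \<forall>c'\<in>configs q. c \<noteq> c' \<longrightarrow> col_inner q N \<delta> c c' = 0"
    show "\<forall>p. q_cycle q N \<delta> p \<longrightarrow> map fst p = map snd p"
    proof (intro allI impI)
      fix p assume qc: "q_cycle q N \<delta> p"
      show "map fst p = map snd p"
      proof (rule ccontr)
        assume ne: "map fst p \<noteq> map snd p"
        define k where "k = length p - 1"
        have lp: "length p = Suc k" and k1: "k \<ge> 1" using qc by (auto simp: q_cycle_def k_def)
        have pne: "p \<noteq> []" using lp by auto
        have hq: "hd p = (qn, qn)" "last p = hd p" using qc r by (auto simp: q_cycle_def n_def qn_def)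
        have p0: "p ! 0 = (qn, qn)" using hq pne by (simp add: hd_conv_nth)
        have pk: "p ! k = (qn, qn)" using hq pne p0 lp
          by (simp add: last_conv_nth hd_conv_nth)
        have pe: "H_edge N \<delta> (p ! i) (p ! (i+1))" if "i < k" for i
          using qc that lp by (auto simp: q_cycle_def H_path_def)
        define P where "P j = (if 0 \<le> j \<and> j \<le> int k then p ! nat j else (qn, qn))" for j
        have Pq: "P j = (qn, qn)" if "j \<le> 0 \<or> j \<ge> int k" for j
        proof (cases "0 \<le> j \<and> j \<le> int k")
          case True
          then have "j = 0 \<or> j = int k" using that by auto
          then show ?thesis using p0 pk True unfolding P_def by auto
        qed (auto simp: P_def)
        have PE: "H_edge N \<delta> (P j) (P (j+1))" for j
        proof (cases "0 \<le> j \<and> j < int k")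
          case True
          then have "P j = p ! nat j" "P (j+1) = p ! (nat j + 1)"
            unfolding P_def by (auto simp: nat_add_distrib)
          then show ?thesis using pe[of "nat j"] True by auto
        next
          case False
          then have "P j = (qn, qn)" "P (j+1) = (qn, qn)" using Pq by auto
          then show ?thesis using qqedge by simp
        qed
        have sf: "win (\<lambda>t. fst (P t) ! 0) j n = fst (P j)" for j
          by (rule win_from_shift) (use H_edge_shape[OF PE assms(3)] n1 in auto)
        have ss: "win (\<lambda>t. snd (P t) ! 0) j n = snd (P j)" for j
          by (rule win_from_shift) (use H_edge_shape[OF PE assms(3)] n1 in auto)
        define c where "c t = fst (P t) ! 0" for t
        define c' where "c' t = snd (P t) ! 0" for t
        have VP: "V c c' n j = P j" for j
          unfolding V_def c_def[abs_def] c'_def[abs_def] using sf ss by simp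
        have cfg: "{t. e t \<noteq> q} \<subseteq> {0..int k}" if "e = c \<or> e = c'" for e
        proof
          fix t assume "t \<in> {t. e t \<noteq> q}"
          moreover have "\<not> (0 \<le> t \<and> t \<le> int k) \<Longrightarrow> e t = q"
            using Pq[of t] that by (auto simp: c_def c'_def qn_def n_def)
          ultimately show "t \<in> {0..int k}" by auto
        qed
        have cc: "c \<in> configs q" "c' \<in> configs q"
          using cfg[of c] cfg[of c'] by (auto simp: configs_def intro: finite_subset)
        obtain j where j: "j < length p" "fst (p ! j) \<noteq> snd (p ! j)"
          using ne by (metis length_map nth_equalityI nth_map)
        have "P (int j) = p ! j" using j lp by (simp add: P_def)
        then have "c \<noteq> c'" using VP[of "int j"] j by (auto simp: V_def) (metis fst_conv snd_conv)
        then have "col_inner q N \<delta> c c' = 0" using LHS cc by blast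
        moreover have "col_inner q N \<delta> c c' \<noteq> 0" using allnz[OF cc] VP PE by simp
        ultimately show False by simp
      qed
    qed
  next
    assume RHS: "\<forall>p. q_cycle q N \<delta> p \<longrightarrow> map fst p = map snd p"
    show "\<forall>c\<in>configs q. \<forall>c'\<in>configs q. c \<noteq> c' \<longrightarrow> col_inner q N \<delta> c c' = 0"
    proof (intro ballI impI)
      fix c c' assume c: "c \<in> configs q" and c': "c' \<in> configs q" and ne: "c \<noteq> c'"
      show "col_inner q N \<delta> c c' = 0"
      proof (rule ccontr)
        assume "col_inner q N \<delta> c c' \<noteq> 0"
        then have E: "H_edge N \<delta> (V c c' n j) (V c c' n (j+1))" for j using allnz[OF c c'] by blast
        define S where "S = {t. c t \<noteq> q} \<union> {t. c' t \<noteq> q}"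
        have fS: "finite S" using c c' by (simp add: S_def configs_def)
        define B where "B = Max (insert 0 (abs ` S))"
        have B0: "B \<ge> 0" using fS by (simp add: B_def)
        have Bq: "c t = q \<and> c' t = q" if "\<bar>t\<bar> > B" for t
        proof (rule ccontr)
          assume "\<not> (c t = q \<and> c' t = q)"
          then have "t \<in> S" by (auto simp: S_def)
          then have "\<bar>t\<bar> \<le> B" using fS unfolding B_def by (intro Max_ge) auto
          then show False using that by simp
        qed
        obtain t0 where t0: "c t0 \<noteq> c' t0" using ne by blast
        have t0B: "\<bar>t0\<bar> \<le> B" using Bq[of t0] t0 by (metis not_le)
        define s where "s = - B - int n"
        define K where "K = nat (B + 1 - s)"
        define p where "p = map (\<lambda>k. V c c' n (s + int k)) [0..<Suc K]"
        have Vq: "V c c' n j = (qn, qn)" if "j + int n \<le> - B \<or> j > B" for j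
        proof -
          have "win e j n = qn" if "e = c \<or> e = c'" for e
            unfolding qn_def
            by (rule nth_equalityI) (use Bq \<open>j + int n \<le> - B \<or> j > B\<close> that in auto)
          then show ?thesis by (simp add: V_def)
        qed
        have K1: "K \<ge> 1" using B0 by (simp add: K_def s_def)
        have pn: "p ! i = V c c' n (s + int i)" if "i \<le> K" for i
          using that unfolding p_def by (simp del: upt_Suc)
        have qc: "q_cycle q N \<delta> p"
        proof -
          have "H_path N \<delta> p"
            unfolding H_path_def
          proof (intro conjI allI impI)
            show "p \<noteq> []" by (simp add: p_def)
            fix i assume "i + 1 < length p"
            then have "i + 1 \<le> K" by (simp add: p_def)
            then show "H_edge N \<delta> (p ! i) (p ! (i + 1))"
              using pn[of i] pn[of "i+1"] E[of "s + int i"] by (simp add: algebra_simps)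
          qed
          moreover have "length p \<ge> 2" using K1 by (simp add: p_def)
          moreover have "hd p = (qn, qn)"
            using pn[of 0] Vq[of s] by (simp add: hd_conv_nth p_def s_def)
          moreover have "last p = (qn, qn)"
            using pn[of K] Vq[of "s + int K"] B0
            by (simp add: last_conv_nth p_def K_def s_def del: upt_Suc)
          ultimately show ?thesis using r by (simp add: q_cycle_def n_def qn_def)
        qed
        then have eq: "map fst p = map snd p" using RHS by blast
        define k0 where "k0 = nat (t0 - s)"
        have k0K: "k0 \<le> K" using t0B B0 by (simp add: k0_def K_def s_def)
        have sk: "s + int k0 = t0" using t0B B0 by (simp add: k0_def s_def)
        have "fst (p ! k0) = snd (p ! k0)"
        proof -
          have lp: "length p = Suc K" by (simp add: p_def del: upt_Suc)
          have "map fst p ! k0 = map snd p ! k0" using eq by (simp only:)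
          then show ?thesis using k0K lp by simp
        qed
        then have "win c t0 n = win c' t0 n" using pn[OF k0K] sk by (simp add: V_def)
        then have "win c t0 n ! 0 = win c' t0 n ! 0" by simp
        then show False using t0 by (simp add: n_def)
      qed
    qed
  qed
qed


end
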